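(* Assume that $\kappa_{\mathcal H}(X_i,X_i)<\infty$ almost surely for every $i\in\{1,\dots,n+1\}$, and that for every $y\in\mathcal Y$ the map $u\mapsto\ell(y,u)$ is convex and twice continuously differentiable with $u\mapsto\partial_2\ell(y,u)$ being $\beta_{\ell;2}$-Lipschitz continuous for some $\beta_{\ell;2}\in(0,\infty)$. Then for every $y,z\in\mathcal Y$ the Bouligand influence function $\mathrm{BIF}(\hat P^y_{n+1};T_\lambda,\hat P^z_{n+1})\in\mathcal H$ exists; it equals $\mathcal D_1\hat f_\lambda(\mathbf u;\cdot)(\mathbf w-\mathbf u)$, the Fréchet differential at $\mathbf u$ of the map $v\mapsto\hat f_\lambda(v;\cdot)$ applied to $\mathbf w-\mathbf u$; and $$\mathrm{BIF}(\hat P^y_{n+1};T_\lambda,\hat P^z_{n+1})=-\mathbf I_{\hat f}(X_{n+1},z)+\mathbf I_{\hat f}(X_{n+1},y),$$ where for every $z'\in\mathcal Y$, $\mathbf I_{\hat f}(X_{n+1},z')=-\frac1{n+1}\partial_2\ell(z',\hat f_{\lambda;D^z}(X_{n+1}))\,\big[\partial_2^2\hat{\mathbf R}_\lambda(\mathbf u;\hat f_{\lambda;D^z})\big]^+K_{X_{n+1}}\in\mathcal A$.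
   Context: Let $\mathcal X\subset\mathbb R^d$, $\mathcal Y\subset\mathbb R$, $D=\{(X_1,Y_1),\dots,(X_n,Y_n)\}$ and $X_{n+1}$ be given (random) data; $\mathcal H$ is an RKHS of functions $\mathcal X\to\mathbb R$ with kernel $\kappa_{\mathcal H}$, $K_x=\kappa_{\mathcal H}(x,\cdot)$, and $\mathcal A=\mathrm{span}\{K_{X_1},\dots,K_{X_{n+1}}\}$. $\ell:\mathcal Y\times\mathcal Y\to\mathbb R$ is a loss, $\partial_2,\partial_2^2$ its derivatives in the second argument, $\lambda>0$. Let $\mathcal M$ be the set of probability distributions on $\mathcal X\times\mathcal Y$ and $T_\lambda:\mathcal M\to\mathcal H$ a measurable map with $T_\lambda(Q)\in\arg\min_{f\in\mathcal H}\mathbb E_{(X,Y)\sim Q}[\ell(Y,f(X))]+\lambda\|f\|_{\mathcal H}^2$. The Bouligand influence function of $T_\lambda$ at $Q$ in the direction $Q'\ne Q$ is $\mathrm{BIF}(Q';T_\lambda,Q)=\lim_{t\to0^+}\frac{T_\lambda((1-t)Q+tQ')-T_\lambda(Q)}{t}$ (limit in $\mathcal H$), when it exists. For $z'\in\mathcal Y$, $\hat P^{z'}_{n+1}=\frac1{n+1}\delta_{(X_{n+1},z')}+\sum_{i=1}^n\frac1{n+1}\delta_{(X_i,Y_i)}$. Fix $y,z\in\mathcal Y$. For $v\in\mathbb R^{n+2}$ and $f\in\mathcal H$ let $\hat{\mathbf R}_\lambda(v;f)=\frac1{n+1}\sum_{i=1}^nv_i\ell(Y_i,f(X_i))+\frac{v_{n+1}}{n+1}\ell(z,f(X_{n+1}))+\frac{v_{n+2}}{n+1}\ell(y,f(X_{n+1}))+\lambda\|f\|^2_{\mathcal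 H}$, and let $\hat f_\lambda(v;\cdot)$ be its minimizer over $\mathcal H$ (unique for $v$ in an open neighbourhood of the segment between $\mathbf u$ and $\mathbf w$), where $\mathbf u=(1,\dots,1,1,0)$ and $\mathbf w=(1,\dots,1,0,1)$ in $\mathbb R^{n+2}$; thus $\hat f_\lambda(\mathbf u;\cdot)=\hat f_{\lambda;D^z}$, the minimizer of $\frac1{n+1}\sum_{(x,y')\in D^z}\ell(y',f(x))+\lambda\|f\|^2_{\mathcal H}$ with $D^z=D\cup\{(X_{n+1},z)\}$. The second Fréchet differential of $\hat{\mathbf R}_\lambda(v;\cdot)$ at $f$, viewed as an operator on $\mathcal H$, is $\partial_2^2\hat{\mathbf R}_\lambda(v;f)=\frac1{n+1}\sum_{i=1}^nv_i\partial_2^2\ell(Y_i,f(X_i))K_{X_i}\otimes K_{X_i}+\frac{v_{n+1}}{n+1}\partial_2^2\ell(z,f(X_{n+1}))K_{X_{n+1}}\otimes K_{X_{n+1}}+\frac{v_{n+2}}{n+1}\partial_2^2\ell(y,f(X_{n+1}))K_{X_{n+1}}\otimes K_{X_{n+1}}+2\lambda\,\mathrm{Id}$, where $(g\otimes g)h=\langle g,h\rangle_{\mathcal H}g$; $[\cdot]^+$ denotes the inverse of its restriction to $\mathcal A$. *)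

theory Defs
  imports "HOL-Analysis.Analysis" "HOL-Probability.Probability"
begin

text \<open>
The RKHS is represented by a real Hilbert space 'h together with its
canonical feature map K :: 'x => 'h (K x = kappa(x, .)); the value of f in 'h at the
point x is given by the reproducing property f(x) = inner f (K x).
The training data D are indexed by a finite type 'i (so n = CARD('i)); the test point
X_{n+1} is Xn.  Vectors v in R^{n+2} are elements of real^('i + bool): component
Inl i is the weight v_i of the training point i, component Inr True is v_{n+1}
(the weight of (X_{n+1}, z)), and component Inr False is v_{n+2}
(the weight of (X_{n+1}, y)).
\<close>

definition evalH :: "('x \<Rightarrow> 'h::real_inner) \<Rightarrow> 'h \<Rightarrow> 'x \<Rightarrow> real" where
  "evalH K f x = inner f (K x)"

definition risk :: "(real \<Rightarrow> real \<Rightarrow> real) \<Rightarrow> ('x \<Rightarrow> 'h::real_inner) \<Rightarrow> real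
    \<Rightarrow> ('x \<times> real) pmf \<Rightarrow> 'h \<Rightarrow> real" where
  "risk loss K lam Q f =
     measure_pmf.expectation Q (\<lambda>(x, y'). loss y' (evalH K f x)) + lam * (norm f)^2"

definition mixture :: "real \<Rightarrow> 'a pmf \<Rightarrow> 'a pmf \<Rightarrow> 'a pmf" where
  "mixture t Q Q' = bind_pmf (bernoulli_pmf t) (\<lambda>b. if b then Q' else Q)"

definition has_BIF :: "(('x \<times> real) pmf \<Rightarrow> 'h::real_normed_vector)
    \<Rightarrow> ('x \<times> real) pmf \<Rightarrow> ('x \<times> real) pmf \<Rightarrow> 'h \<Rightarrow> bool" where
  "has_BIF T Q' Q B \<longleftrightarrow>
     ((\<lambda>t. (1 / t) *\<^sub>R (T (mixture t Q Q') - T Q)) \<longlongrightarrow> B) (at_right 0)"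

definition Pemp :: "('i::finite \<Rightarrow> 'x) \<Rightarrow> ('i \<Rightarrow> real) \<Rightarrow> 'x \<Rightarrow> real \<Rightarrow> ('x \<times> real) pmf" where
  "Pemp X Y Xn z' =
     map_pmf (\<lambda>j. case j of None \<Rightarrow> (Xn, z') | Some i \<Rightarrow> (X i, Y i)) (pmf_of_set UNIV)"

definition Rhat :: "(real \<Rightarrow> real \<Rightarrow> real) \<Rightarrow> ('x \<Rightarrow> 'h::real_inner) \<Rightarrow> real
    \<Rightarrow> ('i::finite \<Rightarrow> 'x) \<Rightarrow> ('i \<Rightarrow> real) \<Rightarrow> 'x \<Rightarrow> real \<Rightarrow> real
    \<Rightarrow> real ^ ('i + bool) \<Rightarrow> 'h \<Rightarrow> real" where
  "Rhat loss K lam X Y Xn z y v f =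
     (\<Sum>i\<in>UNIV. v $ Inl i * loss (Y i) (evalH K f (X i))) / (real CARD('i) + 1)
     + v $ Inr True / (real CARD('i) + 1) * loss z (evalH K f Xn)
     + v $ Inr False / (real CARD('i) + 1) * loss y (evalH K f Xn)
     + lam * (norm f)^2"

definition fhat :: "(real \<Rightarrow> real \<Rightarrow> real) \<Rightarrow> ('x \<Rightarrow> 'h::real_inner) \<Rightarrow> real
    \<Rightarrow> ('i::finite \<Rightarrow> 'x) \<Rightarrow> ('i \<Rightarrow> real) \<Rightarrow> 'x \<Rightarrow> real \<Rightarrow> real
    \<Rightarrow> real ^ ('i + bool) \<Rightarrow> 'h" where
  "fhat loss K lam X Y Xn z y v =
     (THE f. \<forall>g. Rhat loss K lam X Y Xn z y v f \<le> Rhat loss K lam X Y Xn z y v g)"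

definition uvec :: "real ^ ('i::finite + bool)" where
  "uvec = (\<chi> j. case j of Inl _ \<Rightarrow> 1 | Inr b \<Rightarrow> (if b then 1 else 0))"

definition wvec :: "real ^ ('i::finite + bool)" where
  "wvec = (\<chi> j. case j of Inl _ \<Rightarrow> 1 | Inr b \<Rightarrow> (if b then 0 else 1))"

text \<open>Second Frechet differential of hat R_lambda(v; .) at f, as an operator on 'h
  (loss2 is the second derivative of the loss in its second argument).\<close>
definition hessR :: "(real \<Rightarrow> real \<Rightarrow> real) \<Rightarrow> ('x \<Rightarrow> 'h::real_inner) \<Rightarrow> real
    \<Rightarrow> ('i::finite \<Rightarrow> 'x) \<Rightarrow> ('i \<Rightarrow> real) \<Rightarrow> 'x \<Rightarrow> real \<Rightarrow> real
    \<Rightarrow> real ^ ('i + bool) \<Rightarrow> 'h \<Rightarrow> 'h \<Rightarrow> 'h" where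
  "hessR loss2 K lam X Y Xn z y v f h =
     (\<Sum>i\<in>UNIV. (v $ Inl i * loss2 (Y i) (evalH K f (X i)) / (real CARD('i) + 1))
                   *\<^sub>R (inner (K (X i)) h *\<^sub>R K (X i)))
     + (v $ Inr True * loss2 z (evalH K f Xn) / (real CARD('i) + 1)) *\<^sub>R (inner (K Xn) h *\<^sub>R K Xn)
     + (v $ Inr False * loss2 y (evalH K f Xn) / (real CARD('i) + 1)) *\<^sub>R (inner (K Xn) h *\<^sub>R K Xn)
     + (2 * lam) *\<^sub>R h"

definition Aspace :: "('x \<Rightarrow> 'h::real_vector) \<Rightarrow> ('i \<Rightarrow> 'x) \<Rightarrow> 'x \<Rightarrow> 'h set" where
  "Aspace K X Xn = span (insert (K Xn) (range (\<lambda>i. K (X i))))"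

text \<open>[Op]^+ b: the inverse of the restriction of Op to A, applied to b.\<close>
definition restr_inv :: "('h \<Rightarrow> 'h) \<Rightarrow> 'h set \<Rightarrow> 'h \<Rightarrow> 'h" where
  "restr_inv Op A b = (THE g. g \<in> A \<and> Op g = b)"

definition Iinf :: "(real \<Rightarrow> real \<Rightarrow> real) \<Rightarrow> (real \<Rightarrow> real \<Rightarrow> real) \<Rightarrow> (real \<Rightarrow> real \<Rightarrow> real)
    \<Rightarrow> ('x \<Rightarrow> 'h::real_inner) \<Rightarrow> real
    \<Rightarrow> ('i::finite \<Rightarrow> 'x) \<Rightarrow> ('i \<Rightarrow> real) \<Rightarrow> 'x \<Rightarrow> real \<Rightarrow> real \<Rightarrow> real \<Rightarrow> 'h" where
  "Iinf loss loss1 loss2 K lam X Y Xn z y z' =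
     (let fz = fhat loss K lam X Y Xn z y uvec
      in (- loss1 z' (evalH K fz Xn) / (real CARD('i) + 1))
           *\<^sub>R restr_inv (hessR loss2 K lam X Y Xn z y uvec fz) (Aspace K X Xn) (K Xn))"

end

theory Submission
  imports Defs
begin


lemma strongly_monotone_zero:
  fixes Phi :: "'h::{real_inner,complete_space} \<Rightarrow> 'h"
  assumes mu: "mu > 0"
    and mono: "\<And>x y. mu * (norm (x - y))^2 \<le> inner (Phi x - Phi y) (x - y)"
    and lipL: "\<And>x y. norm (Phi x - Phi y) \<le> L * norm (x - y)"
  shows "\<exists>x. Phi x = 0"
proof -
  define L' where "L' = max L mu"
  have L'pos: "L' > 0" "mu \<le> L'" using mu by (auto simp: L'_def)
  have lip: "norm (Phi x - Phi y) \<le> L' * norm (x - y)" for x y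
    by (rule order_trans[OF lipL]) (auto simp: L'_def intro!: mult_right_mono)
  define eta where "eta = mu / L'^2"
  define q where "q = 1 - mu^2 / L'^2"
  define c where "c = sqrt q"
  have q01: "0 \<le> q" "q < 1"
  proof -
    have "mu^2 \<le> L'^2" using L'pos mu by (intro power_mono) auto
    hence "mu^2 / L'^2 \<le> 1" using L'pos by simp
    moreover have "mu^2 / L'^2 > 0" using mu L'pos by simp
    ultimately show "0 \<le> q" "q < 1" unfolding q_def by linarith+
  qed
  have c01: "0 \<le> c" "c < 1" using q01 by (auto simp: c_def)
  define S where "S x = x - eta *\<^sub>R Phi x" for x
  have contr: "dist (S x) (S y) \<le> c * dist x y" for x y
  proof -
    define d where "d = x - y"
    define p where "p = Phi x - Phi y"
    have eq: "S x - S y = d - eta *\<^sub>R p" by (simp add: S_def d_def p_def algebra_simps)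
    have "(norm (d - eta *\<^sub>R p))^2 = (norm d)^2 - 2 * eta * inner p d + eta^2 * (norm p)^2"
    proof -
      have "(norm (d - eta *\<^sub>R p))^2 = inner (d - eta *\<^sub>R p) (d - eta *\<^sub>R p)" by (simp only: power2_norm_eq_inner)
      also have "\<dots> = inner d d - eta * inner d p - eta * inner p d + eta * eta * inner p p"
        by (simp add: inner_diff_left inner_diff_right algebra_simps)
      also have "\<dots> = (norm d)^2 - 2 * eta * inner p d + eta^2 * (norm p)^2"
        by (simp add: inner_commute[of d p] dot_square_norm power2_eq_square[of eta])
      finally show ?thesis .
    qed
    also have "\<dots> \<le> (norm d)^2 - 2 * eta * (mu * (norm d)^2) + eta^2 * (L' * norm d)^2"
    proof -
      have e0: "eta \<ge> 0" using mu L'pos by (simp add: eta_def)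
      have "eta * (mu * (norm d)^2) \<le> eta * inner p d"
        using mono[of x y] e0 by (auto simp: d_def p_def intro: mult_left_mono)
      moreover have "eta^2 * (norm p)^2 \<le> eta^2 * (L' * norm d)^2"
        using lip[of x y] by (auto simp: d_def p_def intro!: mult_left_mono power_mono)
      ultimately show ?thesis by linarith
    qed
    also have "\<dots> = q * (norm d)^2"
    proof -
      have "\<And>nd::real. nd^2 - 2 * (mu / L'^2) * (mu * nd^2) + (mu / L'^2)^2 * (L' * nd)^2 = (1 - mu^2 / L'^2) * nd^2"
        using L'pos by (simp add: field_simps power2_eq_square)
      thus ?thesis by (simp add: eta_def q_def)
    qed
    finally have "(norm (S x - S y))^2 \<le> (c * norm d)^2"
      using q01 by (simp add: eq c_def power_mult_distrib)
    hence "norm (S x - S y) \<le> c * norm d"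
      by (rule power2_le_imp_le) (use c01 in auto)
    thus ?thesis by (simp add: dist_norm d_def)
  qed
  have "\<forall>x y. dist (S x) (S y) \<le> c * dist x y" using contr by blast
  from ex1_implies_ex[OF banach_fix_type[OF c01 this]] obtain x where "S x = x" by blast
  hence "eta *\<^sub>R Phi x = 0" by (simp add: S_def)
  moreover have "eta > 0" using mu L'pos by (simp add: eta_def)
  ultimately show ?thesis by auto
qed
lemma loss1_mono:
  assumes cv: "convex_on UNIV g" and dg: "\<And>u. (g has_real_derivative g1 u) (at u)"
  shows "(g1 s - g1 t) * (s - t) \<ge> 0"
proof -
  have "g t - g s \<ge> g1 s * (t - s)"
    by (rule convex_on_imp_above_tangent[OF cv]) (auto simp: dg)
  moreover have "g s - g t \<ge> g1 t * (s - t)"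
    by (rule convex_on_imp_above_tangent[OF cv]) (auto simp: dg)
  ultimately show ?thesis by (simp add: algebra_simps)
qed

lemma loss2_nonneg:
  assumes cv: "convex_on UNIV g" and dg: "\<And>u. (g has_real_derivative g1 u) (at u)"
    and dg1: "(g1 has_real_derivative g2) (at s)"
  shows "g2 \<ge> 0"
proof (rule mono_on_imp_deriv_nonneg[OF _ dg1])
  show "mono_on UNIV g1"
  proof (rule mono_onI)
    fix r t :: real assume "r \<le> t"
    with loss1_mono[OF cv dg, of r t] show "g1 r \<le> g1 t"
      by (cases "r = t") (auto simp: zero_le_mult_iff)
  qed
qed auto

locale gen =
  fixes loss loss1 loss2 :: "real \<Rightarrow> real \<Rightarrow> real" and Ys :: "real set"
    and kk :: "'j::finite \<Rightarrow> 'h::{real_inner,complete_space}" and lab :: "'j \<Rightarrow> real"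
    and lam beta NN :: real and u0 :: "real^'j"
  assumes lam: "lam > 0" and beta: "beta > 0" and NN: "NN > 0"
    and lab_in: "\<And>j. lab j \<in> Ys"
    and convex: "\<And>a. a \<in> Ys \<Longrightarrow> convex_on UNIV (loss a)"
    and d1: "\<And>a u. a \<in> Ys \<Longrightarrow> (loss a has_real_derivative loss1 a u) (at u)"
    and d2: "\<And>a u. a \<in> Ys \<Longrightarrow> (loss1 a has_real_derivative loss2 a u) (at u)"
    and lip: "\<And>a u u'. a \<in> Ys \<Longrightarrow> \<bar>loss1 a u - loss1 a u'\<bar> \<le> beta * \<bar>u - u'\<bar>"
    and u0: "\<And>j. u0 $ j \<ge> 0"
begin

definition F :: "real^'j \<Rightarrow> 'h \<Rightarrow> real" where
  "F v f = (\<Sum>j\<in>UNIV. v $ j * loss (lab j) (inner f (kk j))) / NN + lam * (norm f)^2"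

definition G :: "real^'j \<Rightarrow> 'h \<Rightarrow> 'h" where
  "G v f = (\<Sum>j\<in>UNIV. (v $ j * loss1 (lab j) (inner f (kk j)) / NN) *\<^sub>R kk j) + (2 * lam) *\<^sub>R f"

definition Kmax :: real where "Kmax = (\<Sum>j\<in>UNIV. (norm (kk j))^2)"

definition del :: real where "del = lam * NN / (beta * (Kmax + 1))"

definition U :: "(real^'j) set" where "U = {v. \<forall>j. \<bar>v $ j - u0 $ j\<bar> \<le> del}"

lemma Kmax_nonneg: "Kmax \<ge> 0" unfolding Kmax_def by (auto intro: sum_nonneg)

lemma del_pos: "del > 0" using lam NN beta Kmax_nonneg by (simp add: del_def)

lemma u0_in_U: "u0 \<in> U" using del_pos by (simp add: U_def)

lemma L1mono: "(loss1 (lab j) s - loss1 (lab j) t) * (s - t) \<ge> 0"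
  using loss1_mono[OF convex[OF lab_in] d1[OF lab_in]] .

lemma weighted_term:
  assumes "v \<in> U"
  shows "v $ j * (loss1 (lab j) s - loss1 (lab j) t) * (s - t) \<ge> - (del * beta * (s - t)^2)"
proof -
  have a: "u0 $ j * ((loss1 (lab j) s - loss1 (lab j) t) * (s - t)) \<ge> 0"
    using u0 L1mono by simp
  have "\<bar>(v $ j - u0 $ j) * ((loss1 (lab j) s - loss1 (lab j) t) * (s - t))\<bar>
      = \<bar>v $ j - u0 $ j\<bar> * (\<bar>loss1 (lab j) s - loss1 (lab j) t\<bar> * \<bar>s - t\<bar>)"
    by (simp add: abs_mult)
  also have "\<dots> \<le> del * ((beta * \<bar>s - t\<bar>) * \<bar>s - t\<bar>)"
    using assms lip[OF lab_in, of j s t] del_pos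
    by (intro mult_mono) (auto simp: U_def)
  finally have b: "(v $ j - u0 $ j) * ((loss1 (lab j) s - loss1 (lab j) t) * (s - t)) \<ge> - (del * beta * (s - t)^2)"
    by (simp add: power2_eq_square abs_le_iff algebra_simps)
  have "v $ j * (loss1 (lab j) s - loss1 (lab j) t) * (s - t) =
     u0 $ j * ((loss1 (lab j) s - loss1 (lab j) t) * (s - t)) + (v $ j - u0 $ j) * ((loss1 (lab j) s - loss1 (lab j) t) * (s - t))"
    by (simp add: algebra_simps)
  with a b show ?thesis by linarith
qed

lemma G_diff: "G v f - G v g = (\<Sum>j\<in>UNIV. (v $ j * (loss1 (lab j) (inner f (kk j)) - loss1 (lab j) (inner g (kk j))) / NN) *\<^sub>R kk j) + (2 * lam) *\<^sub>R (f - g)"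
proof -
  have "(\<Sum>j\<in>UNIV. (v $ j * loss1 (lab j) (inner f (kk j)) / NN) *\<^sub>R kk j) - (\<Sum>j\<in>UNIV. (v $ j * loss1 (lab j) (inner g (kk j)) / NN) *\<^sub>R kk j)
      = (\<Sum>j\<in>UNIV. (v $ j * loss1 (lab j) (inner f (kk j)) / NN - v $ j * loss1 (lab j) (inner g (kk j)) / NN) *\<^sub>R kk j)"
    by (simp add: sum_subtractf scaleR_diff_left)
  also have "\<dots> = (\<Sum>j\<in>UNIV. (v $ j * (loss1 (lab j) (inner f (kk j)) - loss1 (lab j) (inner g (kk j))) / NN) *\<^sub>R kk j)"
    by (simp add: right_diff_distrib diff_divide_distrib)
  finally show ?thesis unfolding G_def by (simp add: scaleR_diff_right)
qed

lemma G_mono: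
  assumes "v \<in> U"
  shows "lam * (norm (f - g))^2 \<le> inner (G v f - G v g) (f - g)"
proof -
  define d where "d = f - g"
  have hterm: "v $ j * (loss1 (lab j) (inner f (kk j)) - loss1 (lab j) (inner g (kk j))) / NN * inner (kk j) d
      \<ge> - (del * beta * (norm d)^2 * (norm (kk j))^2 / NN)" for j
  proof -
    have e: "inner (kk j) d = inner f (kk j) - inner g (kk j)"
      by (simp add: d_def inner_diff_right inner_commute)
    have "v $ j * (loss1 (lab j) (inner f (kk j)) - loss1 (lab j) (inner g (kk j))) * inner (kk j) d
        \<ge> - (del * beta * (inner (kk j) d)^2)"
      using weighted_term[OF assms, where j=j and s="inner f (kk j)" and t="inner g (kk j)"] by (simp add: e)
    moreover have "(inner (kk j) d)^2 \<le> (norm d)^2 * (norm (kk j))^2"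
    proof -
      have "\<bar>inner (kk j) d\<bar> \<le> norm (kk j) * norm d" by (rule Cauchy_Schwarz_ineq2)
      hence "(inner (kk j) d)^2 \<le> (norm (kk j) * norm d)^2"
        by (metis abs_ge_zero power2_abs power_mono)
      thus ?thesis by (simp add: power_mult_distrib mult.commute)
    qed
    ultimately have "v $ j * (loss1 (lab j) (inner f (kk j)) - loss1 (lab j) (inner g (kk j))) * inner (kk j) d
        \<ge> - (del * beta * ((norm d)^2 * (norm (kk j))^2))"
    proof -
      have "del * beta * (inner (kk j) d)^2 \<le> del * beta * ((norm d)^2 * (norm (kk j))^2)"
        using del_pos beta \<open>(inner (kk j) d)^2 \<le> (norm d)^2 * (norm (kk j))^2\<close>
        by (intro mult_left_mono) auto
      thus ?thesis using \<open>v $ j * (loss1 (lab j) (inner f (kk j)) - loss1 (lab j) (inner g (kk j))) * inner (kk j) d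
        \<ge> - (del * beta * (inner (kk j) d)^2)\<close> by linarith
    qed
    thus ?thesis using NN by (simp add: divide_le_eq field_simps)
  qed
  have "inner (G v f - G v g) (f - g) =
      (\<Sum>j\<in>UNIV. v $ j * (loss1 (lab j) (inner f (kk j)) - loss1 (lab j) (inner g (kk j))) / NN * inner (kk j) d)
      + 2 * lam * (norm d)^2"
    by (simp add: G_diff d_def[symmetric] inner_add_left inner_sum_left power2_norm_eq_inner)
  moreover have "(\<Sum>j\<in>UNIV. v $ j * (loss1 (lab j) (inner f (kk j)) - loss1 (lab j) (inner g (kk j))) / NN * inner (kk j) d)
      \<ge> (\<Sum>j\<in>UNIV. - (del * beta * (norm d)^2 * (norm (kk j))^2 / NN))"
    by (rule sum_mono) (rule hterm)
  moreover have "(\<Sum>j\<in>UNIV. - (del * beta * (norm d)^2 * (norm (kk j))^2 / NN)) = - (del * beta * (norm d)^2 * Kmax / NN)"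
    by (simp add: Kmax_def sum_negf sum_divide_distrib[symmetric] sum_distrib_left)
  moreover have "del * beta * Kmax / NN \<le> lam"
  proof -
    have e: "del * beta * (Kmax + 1) = lam * NN"
      using beta NN Kmax_nonneg by (simp add: del_def)
    have "del * beta * Kmax \<le> del * beta * (Kmax + 1)"
      using del_pos beta by (intro mult_left_mono) auto
    hence "del * beta * Kmax \<le> lam * NN" using e by simp
    thus ?thesis using NN by (simp add: divide_le_eq mult.commute)
  qed
  hence "del * beta * (norm d)^2 * Kmax / NN \<le> lam * (norm d)^2"
    using mult_right_mono[of "del * beta * Kmax / NN" lam "(norm d)^2"] by (simp add: algebra_simps)
  ultimately have "lam * (norm d)^2 \<le> inner (G v f - G v g) (f - g)" by linarith
  thus ?thesis unfolding d_def .
qed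


lemma norm_sum_kk: "norm (\<Sum>j\<in>UNIV. c j *\<^sub>R kk j) \<le> (\<Sum>j\<in>UNIV. \<bar>c j\<bar> * norm (kk j))"
  by (rule order_trans[OF norm_sum]) simp

lemma inner_kk_le: "\<bar>inner f (kk j)\<bar> \<le> norm f * norm (kk j)"
  by (rule Cauchy_Schwarz_ineq2)

lemma G_lip: "norm (G v f - G v g) \<le> ((\<Sum>j\<in>UNIV. \<bar>v $ j\<bar> * beta * norm (kk j) * norm (kk j) / NN) + 2 * lam) * norm (f - g)"
proof -
  have "norm (G v f - G v g) \<le> norm (\<Sum>j\<in>UNIV. (v $ j * (loss1 (lab j) (inner f (kk j)) - loss1 (lab j) (inner g (kk j))) / NN) *\<^sub>R kk j) + norm ((2 * lam) *\<^sub>R (f - g))"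
    unfolding G_diff by (rule norm_triangle_ineq)
  also have "\<dots> \<le> (\<Sum>j\<in>UNIV. \<bar>v $ j * (loss1 (lab j) (inner f (kk j)) - loss1 (lab j) (inner g (kk j))) / NN\<bar> * norm (kk j)) + 2 * lam * norm (f - g)"
    using lam by (intro add_mono norm_sum_kk) simp
  also have "\<dots> \<le> (\<Sum>j\<in>UNIV. \<bar>v $ j\<bar> * beta * norm (kk j) * norm (kk j) / NN * norm (f - g)) + 2 * lam * norm (f - g)"
  proof (intro add_mono sum_mono order_refl)
    fix j
    have a: "\<bar>loss1 (lab j) (inner f (kk j)) - loss1 (lab j) (inner g (kk j))\<bar> \<le> beta * (norm (f - g) * norm (kk j))"
    proof -
      have "\<bar>loss1 (lab j) (inner f (kk j)) - loss1 (lab j) (inner g (kk j))\<bar> \<le> beta * \<bar>inner f (kk j) - inner g (kk j)\<bar>"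
        using lip[OF lab_in] .
      also have "\<bar>inner f (kk j) - inner g (kk j)\<bar> \<le> norm (f - g) * norm (kk j)"
        using inner_kk_le[of "f - g" j] by (simp add: inner_diff_left)
      hence "beta * \<bar>inner f (kk j) - inner g (kk j)\<bar> \<le> beta * (norm (f - g) * norm (kk j))"
        using beta by (intro mult_left_mono) auto
      finally show ?thesis .
    qed
    have "\<bar>v $ j * (loss1 (lab j) (inner f (kk j)) - loss1 (lab j) (inner g (kk j))) / NN\<bar> * norm (kk j)
        = \<bar>v $ j\<bar> * \<bar>loss1 (lab j) (inner f (kk j)) - loss1 (lab j) (inner g (kk j))\<bar> * norm (kk j) / NN"
      using NN by (simp add: abs_mult)
    also have "\<dots> \<le> \<bar>v $ j\<bar> * (beta * (norm (f - g) * norm (kk j))) * norm (kk j) / NN"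
      using NN a by (intro divide_right_mono mult_right_mono mult_left_mono) auto
    also have "\<dots> = \<bar>v $ j\<bar> * beta * norm (kk j) * norm (kk j) / NN * norm (f - g)"
      by (simp add: algebra_simps)
    finally show "\<bar>v $ j * (loss1 (lab j) (inner f (kk j)) - loss1 (lab j) (inner g (kk j))) / NN\<bar> * norm (kk j)
        \<le> \<bar>v $ j\<bar> * beta * norm (kk j) * norm (kk j) / NN * norm (f - g)" .
  qed
  also have "\<dots> = ((\<Sum>j\<in>UNIV. \<bar>v $ j\<bar> * beta * norm (kk j) * norm (kk j) / NN) + 2 * lam) * norm (f - g)"
    by (simp only: sum_distrib_right[symmetric] distrib_right)
  finally show ?thesis .
qed

lemma G_zero_ex1:
  assumes "v \<in> U"
  shows "\<exists>!f. G v f = 0"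
proof (rule ex_ex1I)
  show "\<exists>f. G v f = 0"
    by (rule strongly_monotone_zero[OF lam G_mono[OF assms] G_lip])
next
  fix f g assume f: "G v f = 0" and g: "G v g = 0"
  have "lam * (norm (f - g))^2 \<le> inner (G v f - G v g) (f - g)" by (rule G_mono[OF assms])
  also have "\<dots> = 0" using f g by simp
  finally have "(norm (f - g))^2 \<le> 0" using lam by (simp add: mult_le_0_iff)
  thus "f = g" by simp
qed

definition zf :: "real^'j \<Rightarrow> 'h" where "zf v = (THE f. G v f = 0)"

lemma zf: "v \<in> U \<Longrightarrow> G v (zf v) = 0"
  unfolding zf_def by (rule theI'[OF G_zero_ex1])

lemma zf_unique: "v \<in> U \<Longrightarrow> G v f = 0 \<Longrightarrow> f = zf v"
  using G_zero_ex1 zf by blast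

lemma F_line_eq:
  "F v (p + t *\<^sub>R d) = (\<Sum>j\<in>UNIV. v $ j * loss (lab j) (inner p (kk j) + t * inner d (kk j))) / NN
     + lam * (inner p p + 2 * t * inner p d + t * t * inner d d)"
proof -
  have "(norm (p + t *\<^sub>R d))^2 = inner (p + t *\<^sub>R d) (p + t *\<^sub>R d)" by (simp only: power2_norm_eq_inner)
  also have "\<dots> = inner p p + 2 * t * inner p d + t * t * inner d d"
    by (simp add: inner_add_left inner_add_right inner_commute[of d p] algebra_simps)
  finally show ?thesis by (simp add: F_def inner_add_left)
qed

lemma F_line_deriv:
  "((\<lambda>t. F v (p + t *\<^sub>R d)) has_real_derivative inner (G v (p + t *\<^sub>R d)) d) (at t)"
proof -
  have dl: "((\<lambda>t. loss (lab j) (inner p (kk j) + t * inner d (kk j))) has_real_derivative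
             loss1 (lab j) (inner p (kk j) + t * inner d (kk j)) * inner d (kk j)) (at t)" for j
  proof (rule DERIV_chain2[OF d1[OF lab_in]])
    show "((\<lambda>t. inner p (kk j) + t * inner d (kk j)) has_real_derivative inner d (kk j)) (at t)"
      by (auto intro!: derivative_eq_intros)
  qed
  have "((\<lambda>t. (\<Sum>j\<in>UNIV. v $ j * loss (lab j) (inner p (kk j) + t * inner d (kk j))) / NN
     + lam * (inner p p + 2 * t * inner p d + t * t * inner d d)) has_real_derivative
      (\<Sum>j\<in>UNIV. v $ j * (loss1 (lab j) (inner p (kk j) + t * inner d (kk j)) * inner d (kk j))) / NN
      + lam * (2 * inner p d + (1 * t + t * 1) * inner d d)) (at t)"
  proof (rule DERIV_add)
    show "((\<lambda>t. (\<Sum>j\<in>UNIV. v $ j * loss (lab j) (inner p (kk j) + t * inner d (kk j))) / NN) has_real_derivative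
      (\<Sum>j\<in>UNIV. v $ j * (loss1 (lab j) (inner p (kk j) + t * inner d (kk j)) * inner d (kk j))) / NN) (at t)"
      by (intro DERIV_cdivide DERIV_sum DERIV_cmult dl)
    show "((\<lambda>t. lam * (inner p p + 2 * t * inner p d + t * t * inner d d)) has_real_derivative
       lam * (2 * inner p d + (1 * t + t * 1) * inner d d)) (at t)"
      by (intro DERIV_cmult) (auto intro!: derivative_eq_intros)
  qed
  moreover have "inner (G v (p + t *\<^sub>R d)) d =
     (\<Sum>j\<in>UNIV. v $ j * (loss1 (lab j) (inner p (kk j) + t * inner d (kk j)) * inner d (kk j))) / NN
      + lam * (2 * inner p d + (1 * t + t * 1) * inner d d)"
    by (simp add: G_def inner_add_left inner_sum_left sum_divide_distrib inner_commute[of "kk _" d] algebra_simps)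
  ultimately show ?thesis by (simp add: F_line_eq)
qed

lemma zf_strict_min:
  assumes v: "v \<in> U" and f: "G v f = 0" and g: "g \<noteq> f"
  shows "F v f < F v g"
proof -
  define d where "d = g - f"
  have dnz: "d \<noteq> 0" using g by (simp add: d_def)
  obtain z where z: "0 < z" "z < 1" and eq: "F v (f + 1 *\<^sub>R d) - F v (f + 0 *\<^sub>R d) = (1 - 0) * inner (G v (f + z *\<^sub>R d)) d"
    using MVT2[of 0 1 "\<lambda>t. F v (f + t *\<^sub>R d)" "\<lambda>t. inner (G v (f + t *\<^sub>R d)) d"] F_line_deriv by auto
  have m: "lam * (norm ((f + z *\<^sub>R d) - f))^2 \<le> inner (G v (f + z *\<^sub>R d) - G v f) ((f + z *\<^sub>R d) - f)"
    by (rule G_mono[OF v])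
  have n1: "norm ((f + z *\<^sub>R d) - f) = z * norm d" using z by simp
  have n2: "inner (G v (f + z *\<^sub>R d) - G v f) ((f + z *\<^sub>R d) - f) = z * inner (G v (f + z *\<^sub>R d)) d"
    using f by simp
  have n3: "(z * norm d)^2 = z * z * (norm d)^2" by (simp add: power2_eq_square)
  have "lam * (z * z * (norm d)^2) \<le> z * inner (G v (f + z *\<^sub>R d)) d"
    using m unfolding n1 n2 n3 .
  moreover have "lam * (z * z * (norm d)^2) > 0" using lam z dnz by simp
  ultimately have "z * inner (G v (f + z *\<^sub>R d)) d > 0" by linarith
  hence "inner (G v (f + z *\<^sub>R d)) d > 0" using z by (simp add: zero_less_mult_iff)
  thus ?thesis using eq by (simp add: d_def)
qed

lemma argmin_eq:
  assumes v: "v \<in> U"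
  shows "(THE f. \<forall>g. F v f \<le> F v g) = zf v"
proof (rule the_equality)
  show "\<forall>g. F v (zf v) \<le> F v g"
    using zf_strict_min[OF v zf[OF v]] by (metis order_le_less)
next
  fix f assume "\<forall>g. F v f \<le> F v g"
  hence "F v f \<le> F v (zf v)" by blast
  thus "f = zf v" using zf_strict_min[OF v zf[OF v], of f] by (metis not_le)
qed

lemma argmin_unique:
  assumes v: "v \<in> U" and "\<forall>g. F v f \<le> F v g"
  shows "f = zf v"
  using assms zf_strict_min[OF v zf[OF v], of f] by (metis not_le)


definition f0 :: 'h where "f0 = zf u0"

lemma f0: "G u0 f0 = 0" unfolding f0_def by (rule zf[OF u0_in_U])

definition cH :: "'j \<Rightarrow> real" where
  "cH j = u0 $ j * loss2 (lab j) (inner f0 (kk j)) / NN"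

definition Hop :: "'h \<Rightarrow> 'h" where
  "Hop h = (\<Sum>j\<in>UNIV. cH j *\<^sub>R (inner (kk j) h *\<^sub>R kk j)) + (2 * lam) *\<^sub>R h"

lemma cH_nonneg: "cH j \<ge> 0"
proof -
  have "loss2 (lab j) (inner f0 (kk j)) \<ge> 0"
    by (rule loss2_nonneg[OF convex[OF lab_in] d1[OF lab_in] d2[OF lab_in]])
  thus ?thesis using u0[of j] NN by (simp add: cH_def)
qed

lemma Hop_linear: "linear Hop"
proof (rule linearI)
  fix x y
  show "Hop (x + y) = Hop x + Hop y"
    by (simp add: Hop_def inner_add_right scaleR_add_left scaleR_add_right sum.distrib)
next
  fix r x
  show "Hop (r *\<^sub>R x) = r *\<^sub>R Hop x"
    by (simp add: Hop_def scaleR_right.sum scaleR_add_right ac_simps)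
qed

lemma Hop_inner: "inner (Hop h) h = (\<Sum>j\<in>UNIV. cH j * (inner (kk j) h * inner (kk j) h)) + 2 * lam * inner h h"
  by (simp add: Hop_def inner_add_left inner_sum_left mult.assoc)

lemma Hop_mono: "2 * lam * (norm h)^2 \<le> inner (Hop h) h"
proof -
  have "(\<Sum>j\<in>UNIV. cH j * (inner (kk j) h * inner (kk j) h)) \<ge> 0"
    by (intro sum_nonneg mult_nonneg_nonneg[OF cH_nonneg zero_le_square])
  thus ?thesis by (simp add: Hop_inner dot_square_norm)
qed

lemma Hop_lower: "2 * lam * norm h \<le> norm (Hop h)"
proof (cases "h = 0")
  case True thus ?thesis by simp
next
  case False
  have "2 * lam * (norm h)^2 \<le> inner (Hop h) h" by (rule Hop_mono)
  also have "\<dots> \<le> norm (Hop h) * norm h" by (rule norm_cauchy_schwarz)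
  finally have "(2 * lam * norm h) * norm h \<le> norm (Hop h) * norm h" by (simp add: power2_eq_square mult.assoc)
  thus ?thesis using False by simp
qed

lemma Hop_bound: "norm (Hop h) \<le> ((\<Sum>j\<in>UNIV. cH j * norm (kk j) * norm (kk j)) + 2 * lam) * norm h"
proof -
  have "norm (Hop h) \<le> norm (\<Sum>j\<in>UNIV. (cH j * inner (kk j) h) *\<^sub>R kk j) + norm ((2 * lam) *\<^sub>R h)"
    unfolding Hop_def scaleR_scaleR by (rule order_trans[OF norm_triangle_ineq]) (use lam in simp)
  also have "\<dots> \<le> (\<Sum>j\<in>UNIV. \<bar>cH j * inner (kk j) h\<bar> * norm (kk j)) + 2 * lam * norm h"
    using lam by (intro add_mono norm_sum_kk) simp
  also have "\<dots> \<le> (\<Sum>j\<in>UNIV. cH j * norm (kk j) * norm (kk j) * norm h) + 2 * lam * norm h"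
  proof (intro add_mono sum_mono order_refl)
    fix j
    have "\<bar>inner (kk j) h\<bar> \<le> norm (kk j) * norm h" by (rule Cauchy_Schwarz_ineq2)
    hence "cH j * \<bar>inner (kk j) h\<bar> * norm (kk j) \<le> cH j * (norm (kk j) * norm h) * norm (kk j)"
      using cH_nonneg[of j] by (intro mult_right_mono mult_left_mono) auto
    thus "\<bar>cH j * inner (kk j) h\<bar> * norm (kk j) \<le> cH j * norm (kk j) * norm (kk j) * norm h"
      using cH_nonneg[of j] by (simp add: abs_mult algebra_simps)
  qed
  also have "\<dots> = ((\<Sum>j\<in>UNIV. cH j * norm (kk j) * norm (kk j)) + 2 * lam) * norm h"
    by (simp only: sum_distrib_right[symmetric] distrib_right)
  finally show ?thesis .
qed

lemma Hop_ex1: "\<exists>!h. Hop h = b"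
proof (rule ex_ex1I)
  have lam2: "2 * lam > 0" using lam by simp
  have "\<exists>h. Hop h - b = 0"
  proof (rule strongly_monotone_zero[OF lam2])
    fix x y
    show "2 * lam * (norm (x - y))^2 \<le> inner ((Hop x - b) - (Hop y - b)) (x - y)"
      using Hop_mono[of "x - y"] by (simp add: linear_diff[OF Hop_linear])
    show "norm ((Hop x - b) - (Hop y - b)) \<le> ((\<Sum>j\<in>UNIV. cH j * norm (kk j) * norm (kk j)) + 2 * lam) * norm (x - y)"
      using Hop_bound[of "x - y"] by (simp add: linear_diff[OF Hop_linear])
  qed
  thus "\<exists>h. Hop h = b" by simp
next
  fix x y assume "Hop x = b" "Hop y = b"
  hence "Hop (x - y) = 0" by (simp add: linear_diff[OF Hop_linear])
  hence "2 * lam * norm (x - y) \<le> 0" using Hop_lower[of "x - y"] by simp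
  thus "x = y" using lam by (simp add: mult_le_0_iff)
qed

definition Hinv :: "'h \<Rightarrow> 'h" where "Hinv b = (THE h. Hop h = b)"

lemma Hinv: "Hop (Hinv b) = b"
  unfolding Hinv_def by (rule theI'[OF Hop_ex1])

lemma Hinv_unique: "Hop h = b \<Longrightarrow> h = Hinv b"
  using Hop_ex1 Hinv by blast

lemma Hinv_span:
  assumes "b \<in> span (range kk)"
  shows "Hinv b \<in> span (range kk)"
proof -
  define h where "h = Hinv b"
  have "Hop h = b" by (simp add: h_def Hinv)
  hence eq: "(2 * lam) *\<^sub>R h = b - (\<Sum>j\<in>UNIV. cH j *\<^sub>R (inner (kk j) h *\<^sub>R kk j))"
    by (simp add: Hop_def algebra_simps)
  have "(\<Sum>j\<in>UNIV. cH j *\<^sub>R (inner (kk j) h *\<^sub>R kk j)) \<in> span (range kk)"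
    by (intro span_sum span_scale span_base) auto
  hence "(2 * lam) *\<^sub>R h \<in> span (range kk)"
    unfolding eq using assms by (rule span_diff[rotated])
  hence "(1 / (2 * lam)) *\<^sub>R ((2 * lam) *\<^sub>R h) \<in> span (range kk)"
    by (rule span_scale)
  thus ?thesis using lam by (simp add: h_def)
qed


definition Bgen :: "'h \<Rightarrow> real^'j \<Rightarrow> 'h" where
  "Bgen f dv = (\<Sum>j\<in>UNIV. (dv $ j * loss1 (lab j) (inner f (kk j)) / NN) *\<^sub>R kk j)"

lemma G_split: "G v f = Bgen f v + (2 * lam) *\<^sub>R f"
  by (simp add: G_def Bgen_def)

lemma Bgen_diff: "Bgen f v - Bgen f w = Bgen f (v - w)"
proof -
  have "Bgen f v - Bgen f w = (\<Sum>j\<in>UNIV. (v $ j * loss1 (lab j) (inner f (kk j)) / NN - w $ j * loss1 (lab j) (inner f (kk j)) / NN) *\<^sub>R kk j)"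
    by (simp add: Bgen_def sum_subtractf scaleR_diff_left)
  also have "\<dots> = Bgen f (v - w)"
    by (simp add: Bgen_def left_diff_distrib diff_divide_distrib)
  finally show ?thesis .
qed

lemma Bgen_norm: "norm (Bgen f dv) \<le> norm dv * (\<Sum>j\<in>UNIV. \<bar>loss1 (lab j) (inner f (kk j))\<bar> * norm (kk j) / NN)"
proof -
  have "norm (Bgen f dv) \<le> (\<Sum>j\<in>UNIV. \<bar>dv $ j * loss1 (lab j) (inner f (kk j)) / NN\<bar> * norm (kk j))"
    unfolding Bgen_def by (rule norm_sum_kk)
  also have "\<dots> \<le> (\<Sum>j\<in>UNIV. norm dv * (\<bar>loss1 (lab j) (inner f (kk j))\<bar> * norm (kk j) / NN))"
  proof (rule sum_mono)
    fix j
    have "\<bar>dv $ j\<bar> \<le> norm dv" by (rule component_le_norm_cart)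
    hence "\<bar>dv $ j\<bar> * (\<bar>loss1 (lab j) (inner f (kk j))\<bar> * norm (kk j) / NN) \<le> norm dv * (\<bar>loss1 (lab j) (inner f (kk j))\<bar> * norm (kk j) / NN)"
      using NN by (intro mult_right_mono) auto
    thus "\<bar>dv $ j * loss1 (lab j) (inner f (kk j)) / NN\<bar> * norm (kk j) \<le> norm dv * (\<bar>loss1 (lab j) (inner f (kk j))\<bar> * norm (kk j) / NN)"
      using NN by (simp add: abs_mult)
  qed
  also have "\<dots> = norm dv * (\<Sum>j\<in>UNIV. \<bar>loss1 (lab j) (inner f (kk j))\<bar> * norm (kk j) / NN)"
    by (simp only: sum_distrib_left[symmetric])
  finally show ?thesis .
qed

definition Cb :: real where
  "Cb = (\<Sum>j\<in>UNIV. \<bar>loss1 (lab j) (inner f0 (kk j))\<bar> * norm (kk j) / NN) / lam"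

lemma Cb_nonneg: "Cb \<ge> 0"
  unfolding Cb_def using lam NN by (intro divide_nonneg_pos sum_nonneg) auto

lemma G_v_f0: "G v f0 = Bgen f0 (v - u0)"
proof -
  have "G v f0 = G v f0 - G u0 f0" by (simp add: f0)
  also have "\<dots> = Bgen f0 v - Bgen f0 u0" by (simp add: G_split)
  finally show ?thesis by (simp add: Bgen_diff)
qed

lemma e_bound:
  assumes v: "v \<in> U"
  shows "norm (zf v - f0) \<le> Cb * norm (v - u0)"
proof (cases "zf v = f0")
  case True thus ?thesis using Cb_nonneg by simp
next
  case False
  define e where "e = zf v - f0"
  have enz: "norm e > 0" using False by (simp add: e_def)
  have "lam * (norm e)^2 \<le> inner (G v (zf v) - G v f0) e"
    unfolding e_def by (rule G_mono[OF v])
  also have "\<dots> = - inner (Bgen f0 (v - u0)) e" by (simp add: zf[OF v] G_v_f0)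
  also have "\<dots> \<le> norm (Bgen f0 (v - u0)) * norm e"
    using norm_cauchy_schwarz[of "- Bgen f0 (v - u0)" e] by simp
  also have "\<dots> \<le> (norm (v - u0) * (lam * Cb)) * norm e"
    using Bgen_norm[of f0 "v - u0"] lam by (intro mult_right_mono) (auto simp: Cb_def)
  finally have "(lam * norm e) * norm e \<le> (lam * (Cb * norm (v - u0))) * norm e"
    by (simp add: power2_eq_square algebra_simps)
  hence "lam * norm e \<le> lam * (Cb * norm (v - u0))" using enz by (rule mult_right_le_imp_le)
  thus ?thesis using lam by (simp add: e_def)
qed

definition Dd :: "real^'j \<Rightarrow> 'h" where
  "Dd dv = (\<Sum>j\<in>UNIV. dv $ j *\<^sub>R ((- loss1 (lab j) (inner f0 (kk j)) / NN) *\<^sub>R Hinv (kk j)))"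

lemma Dd_linear: "bounded_linear Dd"
proof -
  have "linear Dd"
  proof (rule linearI)
    fix x y :: "real^'j"
    show "Dd (x + y) = Dd x + Dd y"
      by (simp only: Dd_def vector_add_component scaleR_add_left sum.distrib)
  next
    fix r and x :: "real^'j"
    show "Dd (r *\<^sub>R x) = r *\<^sub>R Dd x"
      by (simp only: Dd_def vector_scaleR_component scaleR_scaleR scaleR_right.sum real_scaleR_def mult.assoc)
  qed
  thus ?thesis by (simp add: linear_conv_bounded_linear)
qed

lemma Hop_Dd: "Hop (Dd dv) = - Bgen f0 dv"
  unfolding Dd_def linear_sum[OF Hop_linear] linear_scale[OF Hop_linear] Hinv
  by (simp add: Bgen_def sum_negf[symmetric])

definition Qt :: "real^'j \<Rightarrow> 'j \<Rightarrow> real" where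
  "Qt v j = u0 $ j / NN * (- (loss1 (lab j) (inner f0 (kk j) + inner (zf v - f0) (kk j)) - loss1 (lab j) (inner f0 (kk j))
               - loss2 (lab j) (inner f0 (kk j)) * inner (zf v - f0) (kk j)))
          + (v - u0) $ j / NN * (loss1 (lab j) (inner f0 (kk j)) - loss1 (lab j) (inner f0 (kk j) + inner (zf v - f0) (kk j)))"

lemma key_identity:
  assumes v: "v \<in> U"
  shows "Hop (zf v - f0) + Bgen f0 (v - u0) = (\<Sum>j\<in>UNIV. Qt v j *\<^sub>R kk j)"
proof -
  define e where "e = zf v - f0"
  have zv: "zf v = f0 + e" by (simp add: e_def)
  have "Hop e + Bgen f0 (v - u0) = Hop e + Bgen f0 (v - u0) - G v (f0 + e) + G u0 f0"
    using zf[OF v] f0 by (simp add: zv)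
  also have "\<dots> = (\<Sum>j\<in>UNIV. (cH j * inner (kk j) e) *\<^sub>R kk j)
       + (\<Sum>j\<in>UNIV. ((v - u0) $ j * loss1 (lab j) (inner f0 (kk j)) / NN) *\<^sub>R kk j)
       - (\<Sum>j\<in>UNIV. (v $ j * loss1 (lab j) (inner (f0 + e) (kk j)) / NN) *\<^sub>R kk j)
       + (\<Sum>j\<in>UNIV. (u0 $ j * loss1 (lab j) (inner f0 (kk j)) / NN) *\<^sub>R kk j)"
    by (simp add: Hop_def Bgen_def G_def algebra_simps)
  also have "\<dots> = (\<Sum>j\<in>UNIV. (cH j * inner (kk j) e + (v - u0) $ j * loss1 (lab j) (inner f0 (kk j)) / NN
        - v $ j * loss1 (lab j) (inner (f0 + e) (kk j)) / NN + u0 $ j * loss1 (lab j) (inner f0 (kk j)) / NN) *\<^sub>R kk j)"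
    by (simp only: scaleR_add_left scaleR_diff_left sum.distrib sum_subtractf)
  also have "\<dots> = (\<Sum>j\<in>UNIV. Qt v j *\<^sub>R kk j)"
  proof (rule sum.cong[OF refl])
    fix j
    show "(cH j * inner (kk j) e + (v - u0) $ j * loss1 (lab j) (inner f0 (kk j)) / NN
        - v $ j * loss1 (lab j) (inner (f0 + e) (kk j)) / NN + u0 $ j * loss1 (lab j) (inner f0 (kk j)) / NN) *\<^sub>R kk j
        = Qt v j *\<^sub>R kk j"
      unfolding Qt_def cH_def e_def[symmetric]
      by (simp add: inner_add_left inner_commute[of "kk j" e] algebra_simps add_divide_distrib diff_divide_distrib)
  qed
  finally show ?thesis by (simp add: e_def)
qed


lemma inU: "norm (v - u0) < del \<Longrightarrow> v \<in> U"
proof -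
  assume a: "norm (v - u0) < del"
  { fix j
    have "\<bar>(v - u0) $ j\<bar> \<le> norm (v - u0)" by (rule component_le_norm_cart)
    hence "\<bar>v $ j - u0 $ j\<bar> \<le> del" using a by simp }
  thus "v \<in> U" by (simp add: U_def)
qed

lemma Q_small:
  assumes eps: "eps > 0"
  shows "\<exists>d>0. \<forall>v. norm (v - u0) < d \<longrightarrow> \<bar>Qt v j\<bar> \<le> eps * norm (v - u0)"
proof -
  define a where "a = inner f0 (kk j)"
  define L2a where "L2a = loss2 (lab j) a"
  define cj where "cj = Cb * norm (kk j)"
  define uj where "uj = u0 $ j"
  have cj0: "cj \<ge> 0" using Cb_nonneg by (simp add: cj_def)
  have uj0: "uj \<ge> 0" using u0 by (simp add: uj_def)
  define eps1 where "eps1 = eps * NN / (2 * (uj + 1) * (cj + 1))"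
  have eps1: "eps1 > 0" using eps NN cj0 uj0 by (simp add: eps1_def)
  have "(loss1 (lab j) has_derivative (\<lambda>h. L2a * h)) (at a)"
    using d2[OF lab_in, of j a] by (simp add: has_field_derivative_def L2a_def)
  then obtain rho where rho: "rho > 0"
    and hrho: "\<And>y. norm (y - a) < rho \<Longrightarrow> norm (loss1 (lab j) y - loss1 (lab j) a - L2a * (y - a)) \<le> eps1 * norm (y - a)"
    using eps1 unfolding has_derivative_at_alt by metis
  define d where "d = min del (min (rho / (cj + 1)) (eps * NN / (2 * beta * (cj + 1))))"
  have dpos: "d > 0" using del_pos rho cj0 eps NN beta by (simp add: d_def)
  show ?thesis
  proof (intro exI conjI allI impI)
    show "d > 0" by (rule dpos)
    fix v :: "real^'j"
    define nv where "nv = norm (v - u0)"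
    assume "norm (v - u0) < d"
    hence nvd: "nv < d" by (simp add: nv_def)
    have nv0: "nv \<ge> 0" by (simp add: nv_def)
    have vU: "v \<in> U" using nvd by (intro inU) (simp add: nv_def d_def)
    define s where "s = inner (zf v - f0) (kk j)"
    have s_le: "\<bar>s\<bar> \<le> cj * nv"
    proof -
      have "\<bar>s\<bar> \<le> norm (zf v - f0) * norm (kk j)" unfolding s_def by (rule inner_kk_le)
      also have "\<dots> \<le> (Cb * nv) * norm (kk j)"
        using e_bound[OF vU] by (intro mult_right_mono) (auto simp: nv_def)
      finally show ?thesis by (simp add: cj_def algebra_simps)
    qed
    have s_rho: "\<bar>s\<bar> < rho"
    proof -
      have "cj * nv \<le> (cj + 1) * nv" using nv0 by (simp add: algebra_simps)
      also have "(cj + 1) * nv < (cj + 1) * (rho / (cj + 1))"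
        using nvd cj0 by (intro mult_strict_left_mono) (auto simp: d_def)
      also have "\<dots> = rho" using cj0 by simp
      finally show ?thesis using s_le by linarith
    qed
    define r where "r = loss1 (lab j) (a + s) - loss1 (lab j) a - L2a * s"
    have r_le: "\<bar>r\<bar> \<le> eps1 * \<bar>s\<bar>"
      using hrho[of "a + s"] s_rho by (simp add: r_def)
    have Qeq: "Qt v j = uj / NN * (- r) + (v - u0) $ j / NN * (loss1 (lab j) a - loss1 (lab j) (a + s))"
      by (simp add: Qt_def r_def a_def s_def uj_def L2a_def algebra_simps)
    have T1: "\<bar>uj / NN * (- r)\<bar> \<le> eps / 2 * nv"
    proof -
      have "\<bar>uj / NN * (- r)\<bar> = uj / NN * \<bar>r\<bar>" using uj0 NN by (simp add: abs_mult)
      also have "\<dots> \<le> uj / NN * (eps1 * (cj * nv))"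
        using r_le s_le eps1 uj0 NN
        by (intro mult_left_mono) (auto intro: order_trans mult_left_mono)
      also have "\<dots> = (uj / (uj + 1) * (cj / (cj + 1))) * (eps / 2 * nv)"
        using NN uj0 cj0 by (simp add: eps1_def field_simps)
      also have "\<dots> \<le> 1 * (eps / 2 * nv)"
      proof (rule mult_right_mono)
        show "uj / (uj + 1) * (cj / (cj + 1)) \<le> 1"
          using uj0 cj0 by (intro mult_le_one) auto
        show "0 \<le> eps / 2 * nv" using eps nv0 by simp
      qed
      finally show ?thesis by simp
    qed
    have T2: "\<bar>(v - u0) $ j / NN * (loss1 (lab j) a - loss1 (lab j) (a + s))\<bar> \<le> eps / 2 * nv"
    proof -
      have c1: "\<bar>(v - u0) $ j\<bar> \<le> nv" unfolding nv_def by (rule component_le_norm_cart)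
      have c2: "\<bar>loss1 (lab j) a - loss1 (lab j) (a + s)\<bar> \<le> beta * (cj * nv)"
      proof -
        have "\<bar>loss1 (lab j) a - loss1 (lab j) (a + s)\<bar> \<le> beta * \<bar>a - (a + s)\<bar>" by (rule lip[OF lab_in])
        also have "\<dots> \<le> beta * (cj * nv)" using s_le beta by (intro mult_left_mono) auto
        finally show ?thesis .
      qed
      have "\<bar>(v - u0) $ j / NN * (loss1 (lab j) a - loss1 (lab j) (a + s))\<bar>
          = \<bar>(v - u0) $ j\<bar> * \<bar>loss1 (lab j) a - loss1 (lab j) (a + s)\<bar> / NN"
        using NN by (simp add: abs_mult)
      also have "\<dots> \<le> nv * (beta * (cj * nv)) / NN"
        using c1 c2 NN nv0 by (intro divide_right_mono mult_mono) auto
      also have "\<dots> = (beta * nv / NN) * cj * nv" by simp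
      also have "\<dots> \<le> (eps / (2 * (cj + 1))) * cj * nv"
      proof (intro mult_right_mono)
        have p: "2 * beta * (cj + 1) > 0" "0 < 1 + cj" using beta cj0 by auto
        have "nv < eps * NN / (2 * beta * (cj + 1))" using nvd by (simp add: d_def)
        hence "nv * (2 * beta * (cj + 1)) \<le> eps * NN" using p by (simp add: less_divide_eq)
        hence "beta * nv * (2 * (1 + cj)) \<le> eps * NN" by (simp add: algebra_simps)
        thus "beta * nv / NN \<le> eps / (2 * (cj + 1))" using NN p by (simp add: field_simps)
      qed (use cj0 nv0 in auto)
      also have "\<dots> = (cj / (cj + 1)) * (eps / 2 * nv)" using cj0 by (simp add: field_simps)
      also have "\<dots> \<le> 1 * (eps / 2 * nv)"
        using cj0 eps nv0 by (intro mult_right_mono) auto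
      finally show ?thesis by simp
    qed
    have "\<bar>Qt v j\<bar> \<le> \<bar>uj / NN * (- r)\<bar> + \<bar>(v - u0) $ j / NN * (loss1 (lab j) a - loss1 (lab j) (a + s))\<bar>"
      unfolding Qeq by (rule abs_triangle_ineq)
    also have "\<dots> \<le> eps * nv" using T1 T2 by linarith
    finally show "\<bar>Qt v j\<bar> \<le> eps * norm (v - u0)" by (simp add: nv_def)
  qed
qed


lemma main_est:
  assumes eps: "eps > 0"
  shows "\<exists>d>0. \<forall>v. norm (v - u0) < d \<longrightarrow> norm (zf v - f0 - Dd (v - u0)) \<le> eps * norm (v - u0)"
proof -
  define Ks where "Ks = (\<Sum>j\<in>UNIV. norm (kk j))"
  have Ks0: "Ks \<ge> 0" unfolding Ks_def by (intro sum_nonneg) auto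
  define eps' where "eps' = 2 * lam * eps / (Ks + 1)"
  have eps': "eps' > 0" using lam eps Ks0 by (simp add: eps'_def)
  have "\<forall>j. \<exists>d. d > 0 \<and> (\<forall>v. norm (v - u0) < d \<longrightarrow> \<bar>Qt v j\<bar> \<le> eps' * norm (v - u0))"
    using Q_small[OF eps'] by blast
  then obtain dfun where dfun: "\<And>j. dfun j > 0"
    and hd: "\<And>j v. norm (v - u0) < dfun j \<Longrightarrow> \<bar>Qt v j\<bar> \<le> eps' * norm (v - u0)"
    by (metis choice)
  define d where "d = min del (Min (range dfun))"
  have dpos: "d > 0" using del_pos dfun by (simp add: d_def)
  show ?thesis
  proof (intro exI conjI allI impI)
    show "d > 0" by (rule dpos)
    fix v :: "real^'j"
    assume nvd: "norm (v - u0) < d"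
    define nv where "nv = norm (v - u0)"
    have vU: "v \<in> U" using nvd by (intro inU) (simp add: d_def)
    have Qj: "\<bar>Qt v j\<bar> \<le> eps' * nv" for j
    proof -
      have "Min (range dfun) \<le> dfun j" by (rule Min_le) auto
      hence "norm (v - u0) < dfun j" using nvd by (simp add: d_def)
      thus ?thesis using hd by (simp add: nv_def)
    qed
    define x where "x = zf v - f0 - Dd (v - u0)"
    have "Hop x = Hop (zf v - f0) - Hop (Dd (v - u0))"
      by (simp add: x_def linear_diff[OF Hop_linear])
    also have "\<dots> = (\<Sum>j\<in>UNIV. Qt v j *\<^sub>R kk j)"
      using key_identity[OF vU] by (simp add: Hop_Dd)
    finally have Hx: "Hop x = (\<Sum>j\<in>UNIV. Qt v j *\<^sub>R kk j)" .
    have "2 * lam * norm x \<le> norm (Hop x)" by (rule Hop_lower)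
    also have "\<dots> \<le> (\<Sum>j\<in>UNIV. \<bar>Qt v j\<bar> * norm (kk j))" unfolding Hx by (rule norm_sum_kk)
    also have "\<dots> \<le> (\<Sum>j\<in>UNIV. eps' * nv * norm (kk j))"
      using Qj by (intro sum_mono mult_right_mono) auto
    also have "\<dots> = eps' * nv * Ks" by (simp add: Ks_def sum_distrib_left)
    also have "\<dots> = (2 * lam * eps * nv) * (Ks / (Ks + 1))"
      using Ks0 by (simp add: eps'_def field_simps)
    also have "\<dots> \<le> (2 * lam * eps * nv) * 1"
      using Ks0 lam eps by (intro mult_left_mono) (auto simp: nv_def)
    finally have "2 * lam * norm x \<le> 2 * lam * (eps * nv)" by simp
    hence "norm x \<le> eps * nv" using lam by simp
    thus "norm (zf v - f0 - Dd (v - u0)) \<le> eps * norm (v - u0)" by (simp add: x_def nv_def)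
  qed
qed

lemma fderiv:
  assumes "\<And>v. v \<in> U \<Longrightarrow> phi v = zf v"
  shows "(phi has_derivative Dd) (at u0)"
  unfolding has_derivative_at_alt
proof (intro conjI allI impI)
  show "bounded_linear Dd" by (rule Dd_linear)
  fix eps :: real assume eps: "eps > 0"
  obtain d where d: "d > 0" and hd: "\<And>v. norm (v - u0) < d \<Longrightarrow> norm (zf v - f0 - Dd (v - u0)) \<le> eps * norm (v - u0)"
    using main_est[OF eps] by blast
  show "\<exists>d>0. \<forall>y. norm (y - u0) < d \<longrightarrow> norm (phi y - phi u0 - Dd (y - u0)) \<le> eps * norm (y - u0)"
  proof (intro exI conjI allI impI)
    show "min d del > 0" using d del_pos by simp
    fix y assume y: "norm (y - u0) < min d del"
    hence "y \<in> U" by (intro inU) simp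
    hence "phi y = zf y" by (rule assms)
    moreover have "phi u0 = f0" using assms[OF u0_in_U] by (simp add: f0_def)
    ultimately show "norm (phi y - phi u0 - Dd (y - u0)) \<le> eps * norm (y - u0)"
      using hd y by simp
  qed
qed

lemma dir_lim:
  "((\<lambda>t. (1 / t) *\<^sub>R (zf (u0 + t *\<^sub>R dw) - f0)) \<longlongrightarrow> Dd dw) (at_right 0)"
proof (rule tendstoI)
  fix e :: real assume e: "e > 0"
  define eps where "eps = e / (2 * (norm dw + 1))"
  have A: "norm dw + 1 > 0" by (rule add_nonneg_pos) simp_all
  have "2 * (norm dw + 1) > 0" using A by simp
  hence eps: "eps > 0" using e unfolding eps_def by (rule divide_pos_pos[rotated])
  obtain d where d: "d > 0" and hd: "\<And>v. norm (v - u0) < d \<Longrightarrow> norm (zf v - f0 - Dd (v - u0)) \<le> eps * norm (v - u0)"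
    using main_est[OF eps] by blast
  show "eventually (\<lambda>t. dist ((1 / t) *\<^sub>R (zf (u0 + t *\<^sub>R dw) - f0)) (Dd dw) < e) (at_right 0)"
    unfolding eventually_at_right_field
  proof (intro exI conjI allI impI)
    show "(0::real) < d / (norm dw + 1)" using d A by simp
    fix t :: real assume t0: "t > 0" and td: "t < d / (norm dw + 1)"
    have "norm ((u0 + t *\<^sub>R dw) - u0) = t * norm dw" using t0 by simp
    also have "\<dots> \<le> t * (norm dw + 1)" using t0 by simp
    also have "\<dots> < d" using td A by (simp add: less_divide_eq)
    finally have "norm ((u0 + t *\<^sub>R dw) - u0) < d" .
    hence "norm (zf (u0 + t *\<^sub>R dw) - f0 - Dd (t *\<^sub>R dw)) \<le> eps * (t * norm dw)"
      using hd[of "u0 + t *\<^sub>R dw"] t0 by simp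
    moreover have "Dd (t *\<^sub>R dw) = t *\<^sub>R Dd dw"
      by (rule linear_scale[OF bounded_linear.linear[OF Dd_linear]])
    ultimately have h: "norm (zf (u0 + t *\<^sub>R dw) - f0 - t *\<^sub>R Dd dw) \<le> eps * (t * norm dw)" by simp
    have "(1 / t) *\<^sub>R (zf (u0 + t *\<^sub>R dw) - f0) - Dd dw = (1 / t) *\<^sub>R (zf (u0 + t *\<^sub>R dw) - f0 - t *\<^sub>R Dd dw)"
      using t0 by (simp add: algebra_simps)
    hence "dist ((1 / t) *\<^sub>R (zf (u0 + t *\<^sub>R dw) - f0)) (Dd dw) = (1 / t) * norm (zf (u0 + t *\<^sub>R dw) - f0 - t *\<^sub>R Dd dw)"
      using t0 by (simp add: dist_norm)
    also have "\<dots> \<le> (1 / t) * (eps * (t * norm dw))" using h t0 by (intro mult_left_mono) auto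
    also have "\<dots> = eps * norm dw" using t0 by simp
    also have "\<dots> < e"
    proof -
      have "eps * norm dw \<le> eps * (norm dw + 1)" using eps by simp
      also have "\<dots> = e / 2"
      proof -
        have "\<And>m::real. m > 0 \<Longrightarrow> e / (2 * m) * m = e / 2" by (simp add: field_simps)
        from this[OF A] show ?thesis by (simp add: eps_def)
      qed
      finally show ?thesis using e by simp
    qed
    finally show "dist ((1 / t) *\<^sub>R (zf (u0 + t *\<^sub>R dw) - f0)) (Dd dw) < e" .
  qed
qed

end



lemma E_mix:
  fixes Q Q' :: "'a pmf" and phi :: "'a \<Rightarrow> real"
  assumes fQ: "finite (set_pmf Q)" and fQ': "finite (set_pmf Q')" and t: "0 \<le> t" "t \<le> 1"
  shows "measure_pmf.expectation (mixture t Q Q') phi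
       = (1 - t) * measure_pmf.expectation Q phi + t * measure_pmf.expectation Q' phi"
proof -
  define A where "A = set_pmf Q \<union> set_pmf Q'"
  have fA: "finite A" using fQ fQ' by (simp add: A_def)
  have pm: "pmf (mixture t Q Q') a = t * pmf Q' a + (1 - t) * pmf Q a" for a
    unfolding mixture_def pmf_bind using t by (simp add: mult.commute)
  have sub: "set_pmf (mixture t Q Q') \<subseteq> A"
    unfolding mixture_def A_def by (auto split: if_splits)
  have "measure_pmf.expectation (mixture t Q Q') phi = (\<Sum>a\<in>A. phi a * pmf (mixture t Q Q') a)"
    by (rule integral_measure_pmf_real[OF fA]) (use sub in auto)
  also have "\<dots> = t * (\<Sum>a\<in>A. phi a * pmf Q' a) + (1 - t) * (\<Sum>a\<in>A. phi a * pmf Q a)"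
    by (simp add: pm sum_distrib_left sum.distrib[symmetric] algebra_simps)
  also have "(\<Sum>a\<in>A. phi a * pmf Q' a) = measure_pmf.expectation Q' phi"
    by (rule integral_measure_pmf_real[OF fA, symmetric]) (auto simp: A_def)
  also have "(\<Sum>a\<in>A. phi a * pmf Q a) = measure_pmf.expectation Q phi"
    by (rule integral_measure_pmf_real[OF fA, symmetric]) (auto simp: A_def)
  finally show ?thesis by simp
qed

lemma sum_UNIV_option: "(\<Sum>x\<in>(UNIV::'i::finite option set). h x) = h None + (\<Sum>i\<in>UNIV. h (Some i))"
proof -
  have "(\<Sum>x\<in>(UNIV::'i option set). h x) = (\<Sum>x\<in>insert None (range Some). h x)"
    by (simp only: UNIV_option_conv)
  also have "\<dots> = h None + (\<Sum>x\<in>range Some. h x)" by (subst sum.insert) auto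
  also have "(\<Sum>x\<in>range Some. h x) = (\<Sum>i\<in>UNIV. h (Some i))" by (subst sum.reindex) auto
  finally show ?thesis .
qed

lemma card_UNIV_opt: "card (UNIV::'i::finite option set) = CARD('i) + 1"
proof -
  have "card (UNIV::'i option set) = card (insert None (range (Some::'i \<Rightarrow> _)))"
    by (simp only: UNIV_option_conv)
  also have "\<dots> = card (range (Some::'i \<Rightarrow> _)) + 1" by (subst card_insert_disjoint) auto
  also have "card (range (Some::'i \<Rightarrow> _)) = CARD('i)" by (rule card_image) simp
  finally show ?thesis .
qed

lemma E_Pemp:
  fixes X :: "'i::finite \<Rightarrow> 'x"
  shows "measure_pmf.expectation (Pemp X Y Xn c) phi
     = ((\<Sum>i\<in>UNIV. phi (X i, Y i)) + phi (Xn, c)) / (real CARD('i) + 1)"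
proof -
  have "measure_pmf.expectation (Pemp X Y Xn c) phi
      = measure_pmf.expectation (pmf_of_set (UNIV :: 'i option set)) (\<lambda>j. phi (case j of None \<Rightarrow> (Xn, c) | Some i \<Rightarrow> (X i, Y i)))"
    unfolding Pemp_def by simp
  also have "\<dots> = (\<Sum>j\<in>(UNIV :: 'i option set). phi (case j of None \<Rightarrow> (Xn, c) | Some i \<Rightarrow> (X i, Y i))) / card (UNIV :: 'i option set)"
    by (rule integral_pmf_of_set) auto
  also have "\<dots> = ((\<Sum>i\<in>UNIV. phi (X i, Y i)) + phi (Xn, c)) / (real CARD('i) + 1)"
    by (simp add: sum_UNIV_option card_UNIV_opt add.commute)
  finally show ?thesis .
qed

lemma set_Pemp:
  fixes X :: "'i::finite \<Rightarrow> 'x"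
  shows "set_pmf (Pemp X Y Xn c) = range (\<lambda>j. case j of None \<Rightarrow> (Xn, c) | Some i \<Rightarrow> (X i, Y i))"
  unfolding Pemp_def by simp

lemma finite_Pemp: "finite (set_pmf (Pemp (X :: 'i::finite \<Rightarrow> 'x) Y Xn c))"
  by (simp add: set_Pemp)

lemma sum_sumbool: "(\<Sum>j\<in>(UNIV::('i::finite + bool) set). h j) = (\<Sum>i\<in>UNIV. h (Inl i)) + h (Inr True) + h (Inr False)"
proof -
  have "(\<Sum>j\<in>(UNIV::('i + bool) set). h j) = (\<Sum>j\<in>(UNIV <+> UNIV :: ('i + bool) set). h j)"
    by simp
  also have "\<dots> = (\<Sum>i\<in>UNIV. h (Inl i)) + (\<Sum>b\<in>UNIV. h (Inr b))"
    by (subst sum.Plus) auto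
  also have "(\<Sum>b\<in>UNIV. h (Inr b)) = h (Inr True) + h (Inr False)"
    by (simp add: UNIV_bool add.commute)
  finally show ?thesis by (simp add: add.assoc)
qed

theorem lemma16:
  fixes loss loss1 loss2 :: "real \<Rightarrow> real \<Rightarrow> real"
    and Ys :: "real set"
    and K :: "'x \<Rightarrow> 'h::{real_inner, complete_space}"
    and X :: "'i::finite \<Rightarrow> 'x" and Y :: "'i \<Rightarrow> real" and Xn :: 'x
    and lam beta :: real
    and T :: "('x \<times> real) pmf \<Rightarrow> 'h"
    and y z :: real
  assumes lam: "lam > 0"
    and beta: "beta > 0"
    and Y_in: "\<And>i. Y i \<in> Ys"
    and y_in: "y \<in> Ys" and z_in: "z \<in> Ys"
    and convex: "\<And>a. a \<in> Ys \<Longrightarrow> convex_on UNIV (loss a)"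
    and d1: "\<And>a u. a \<in> Ys \<Longrightarrow> (loss a has_real_derivative loss1 a u) (at u)"
    and d2: "\<And>a u. a \<in> Ys \<Longrightarrow> (loss1 a has_real_derivative loss2 a u) (at u)"
    and d2_cont: "\<And>a. a \<in> Ys \<Longrightarrow> continuous_on UNIV (loss2 a)"
    and lip: "\<And>a u u'. a \<in> Ys \<Longrightarrow> \<bar>loss1 a u - loss1 a u'\<bar> \<le> beta * \<bar>u - u'\<bar>"
    and T_min: "\<And>Q. finite (set_pmf Q) \<Longrightarrow> set_pmf Q \<subseteq> UNIV \<times> Ys \<Longrightarrow>
                  (\<exists>f. \<forall>g. risk loss K lam Q f \<le> risk loss K lam Q g) \<Longrightarrow>
                  (\<forall>g. risk loss K lam Q (T Q) \<le> risk loss K lam Q g)"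
  shows "\<exists>D. (fhat loss K lam X Y Xn z y has_derivative D) (at uvec)
           \<and> has_BIF T (Pemp X Y Xn y) (Pemp X Y Xn z) (D (wvec - uvec))
           \<and> D (wvec - uvec) = - Iinf loss loss1 loss2 K lam X Y Xn z y z
                                + Iinf loss loss1 loss2 K lam X Y Xn z y y
           \<and> Iinf loss loss1 loss2 K lam X Y Xn z y z \<in> Aspace K X Xn
           \<and> Iinf loss loss1 loss2 K lam X Y Xn z y y \<in> Aspace K X Xn"
proof -
  define kk where "kk = (\<lambda>j::'i + bool. case j of Inl i \<Rightarrow> K (X i) | Inr b \<Rightarrow> K Xn)"
  define lab where "lab = (\<lambda>j::'i + bool. case j of Inl i \<Rightarrow> Y i | Inr b \<Rightarrow> (if b then z else y))"
  define NN where "NN = real CARD('i) + 1"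
  have lab_in: "lab j \<in> Ys" for j
    by (cases j) (auto simp: lab_def Y_in y_in z_in)
  interpret g: gen loss loss1 loss2 Ys kk lab lam beta NN "uvec :: real^('i + bool)"
  proof
    show "lam > 0" "beta > 0" by (fact lam, fact beta)
    show "NN > 0" by (simp add: NN_def add_nonneg_pos)
    show "\<And>j. lab j \<in> Ys" by (fact lab_in)
    show "\<And>a. a \<in> Ys \<Longrightarrow> convex_on UNIV (loss a)" by (fact convex)
    show "\<And>a u. a \<in> Ys \<Longrightarrow> (loss a has_real_derivative loss1 a u) (at u)" by (fact d1)
    show "\<And>a u. a \<in> Ys \<Longrightarrow> (loss1 a has_real_derivative loss2 a u) (at u)" by (fact d2)
    show "\<And>a u u'. a \<in> Ys \<Longrightarrow> \<bar>loss1 a u - loss1 a u'\<bar> \<le> beta * \<bar>u - u'\<bar>" by (fact lip)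
    show "\<And>j. 0 \<le> (uvec :: real^('i + bool)) $ j" by (auto simp: uvec_def split: sum.split)
  qed
  have Rhat_eq: "Rhat loss K lam X Y Xn z y v f = g.F v f" for v f
    unfolding Rhat_def g.F_def sum_sumbool by (simp add: kk_def lab_def NN_def evalH_def add_divide_distrib)
  have fhat_eq: "fhat loss K lam X Y Xn z y v = (THE f. \<forall>h. g.F v f \<le> g.F v h)" for v
    by (simp add: fhat_def Rhat_eq)
  have fhat_U: "fhat loss K lam X Y Xn z y v = g.zf v" if "v \<in> g.U" for v
    using g.argmin_eq[OF that] by (simp add: fhat_eq)
  have deriv: "(fhat loss K lam X Y Xn z y has_derivative g.Dd) (at uvec)"
    by (rule g.fderiv) (rule fhat_U)
  have f0eq: "fhat loss K lam X Y Xn z y uvec = g.f0"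
    using fhat_U[OF g.u0_in_U] by (simp add: g.f0_def)
  have hess_eq: "hessR loss2 K lam X Y Xn z y uvec g.f0 = g.Hop"
    unfolding fun_eq_iff hessR_def g.Hop_def g.cH_def sum_sumbool by (simp add: kk_def lab_def NN_def evalH_def uvec_def)
  have range_kk: "range kk = insert (K Xn) (range (\<lambda>i. K (X i)))"
  proof
    show "range kk \<subseteq> insert (K Xn) (range (\<lambda>i. K (X i)))"
      by (auto simp: kk_def split: sum.split)
    have "K Xn = kk (Inr True)" by (simp add: kk_def)
    moreover have "K (X i) = kk (Inl i)" for i by (simp add: kk_def)
    ultimately show "insert (K Xn) (range (\<lambda>i. K (X i))) \<subseteq> range kk" by auto
  qed
  have A_eq: "Aspace K X Xn = span (range kk)"
    by (simp add: Aspace_def range_kk)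
  have KXn_span: "K Xn \<in> span (range kk)"
    by (rule span_base) (simp add: range_kk)
  have rinv: "restr_inv g.Hop (span (range kk)) (K Xn) = g.Hinv (K Xn)"
    unfolding restr_inv_def
  proof (rule the_equality)
    show "g.Hinv (K Xn) \<in> span (range kk) \<and> g.Hop (g.Hinv (K Xn)) = K Xn"
      using g.Hinv_span[OF KXn_span] g.Hinv by simp
  next
    fix h assume "h \<in> span (range kk) \<and> g.Hop h = K Xn"
    thus "h = g.Hinv (K Xn)" using g.Hinv_unique by blast
  qed
  have Iinf_eq: "Iinf loss loss1 loss2 K lam X Y Xn z y z' = (- loss1 z' (inner g.f0 (K Xn)) / NN) *\<^sub>R g.Hinv (K Xn)" for z'
    unfolding Iinf_def Let_def f0eq hess_eq A_eq rinv evalH_def NN_def[symmetric] by simp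
  have D_eq: "g.Dd (wvec - uvec) = - Iinf loss loss1 loss2 K lam X Y Xn z y z + Iinf loss loss1 loss2 K lam X Y Xn z y y"
    unfolding g.Dd_def sum_sumbool Iinf_eq by (simp add: uvec_def wvec_def kk_def lab_def)
  have mem: "Iinf loss loss1 loss2 K lam X Y Xn z y z' \<in> Aspace K X Xn" for z'
    unfolding Iinf_eq A_eq by (rule span_scale) (rule g.Hinv_span[OF KXn_span])
  define Pz where "Pz = Pemp X Y Xn z"
  define Py where "Py = Pemp X Y Xn y"
  define dw where "dw = (wvec - uvec :: real^('i + bool))"
  have dw_comp: "\<bar>dw $ j\<bar> \<le> 1" for j
    by (auto simp: dw_def uvec_def wvec_def split: sum.split)
  have risk_Pemp: "risk loss K lam (Pemp X Y Xn c) f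
      = ((\<Sum>i\<in>UNIV. loss (Y i) (evalH K f (X i))) + loss c (evalH K f Xn)) / NN + lam * (norm f)^2" for c f
    by (simp add: risk_def E_Pemp NN_def)
  have risk_z: "risk loss K lam Pz f = g.F uvec f" for f
  proof -
    have "risk loss K lam Pz f = Rhat loss K lam X Y Xn z y uvec f"
      unfolding Pz_def risk_Pemp Rhat_def by (simp add: uvec_def evalH_def add_divide_distrib NN_def)
    thus ?thesis by (simp only: Rhat_eq)
  qed
  have risk_mix: "risk loss K lam (mixture t Pz Py) f = g.F (uvec + t *\<^sub>R dw) f" if t: "0 \<le> t" "t \<le> 1" for t f
  proof -
    have "risk loss K lam (mixture t Pz Py) f
        = (1 - t) * measure_pmf.expectation Pz (\<lambda>(x, y'). loss y' (evalH K f x))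
          + t * measure_pmf.expectation Py (\<lambda>(x, y'). loss y' (evalH K f x)) + lam * (norm f)^2"
      unfolding risk_def by (subst E_mix) (auto simp: Pz_def Py_def finite_Pemp t)
    also have "\<dots> = Rhat loss K lam X Y Xn z y (uvec + t *\<^sub>R dw) f"
    proof -
      have c1: "(uvec + t *\<^sub>R dw) $ Inl i = 1" for i by (simp add: dw_def uvec_def wvec_def)
      have c2: "(uvec + t *\<^sub>R dw) $ Inr True = 1 - t" by (simp add: dw_def uvec_def wvec_def)
      have c3: "(uvec + t *\<^sub>R dw) $ Inr False = t" by (simp add: dw_def uvec_def wvec_def)
      define S where "S = (\<Sum>i\<in>UNIV. loss (Y i) (evalH K f (X i)))"
      define a where "a = loss z (evalH K f Xn)"
      define b where "b = loss y (evalH K f Xn)"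
      have NN0: "NN \<noteq> 0" using g.NN by simp
      have "Rhat loss K lam X Y Xn z y (uvec + t *\<^sub>R dw) f = S / NN + (1 - t) / NN * a + t / NN * b + lam * (norm f)^2"
        unfolding Rhat_def c1 c2 c3 by (simp add: S_def a_def b_def NN_def)
      moreover have "(1 - t) * measure_pmf.expectation Pz (\<lambda>(x, y'). loss y' (evalH K f x))
          + t * measure_pmf.expectation Py (\<lambda>(x, y'). loss y' (evalH K f x))
          = (1 - t) * ((S + a) / NN) + t * ((S + b) / NN)"
        by (simp add: Pz_def Py_def E_Pemp S_def a_def b_def NN_def)
      moreover have "(1 - t) * ((S + a) / NN) + t * ((S + b) / NN) = S / NN + (1 - t) / NN * a + t / NN * b"
        using NN0 by (simp add: field_simps)
      ultimately show ?thesis by simp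
    qed
    finally show ?thesis by (simp add: Rhat_eq)
  qed
  have set_sub: "set_pmf (Pemp X Y Xn c) \<subseteq> UNIV \<times> Ys" if "c \<in> Ys" for c
    using that by (auto simp: set_Pemp Y_in split: option.split_asm)
  have zf_min: "\<forall>h. g.F v (g.zf v) \<le> g.F v h" if "v \<in> g.U" for v
    using g.zf_strict_min[OF that g.zf[OF that]] by (metis order_le_less)
  have T_eq: "T Q = g.zf v" if fin: "finite (set_pmf Q)" and sub: "set_pmf Q \<subseteq> UNIV \<times> Ys"
      and vU: "v \<in> g.U" and rq: "\<And>f. risk loss K lam Q f = g.F v f" for Q v
  proof -
    have "\<exists>f. \<forall>h. risk loss K lam Q f \<le> risk loss K lam Q h"
      using zf_min[OF vU] by (auto simp: rq)
    hence "\<forall>h. risk loss K lam Q (T Q) \<le> risk loss K lam Q h" using T_min[OF fin sub] by blast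
    hence "\<forall>h. g.F v (T Q) \<le> g.F v h" by (simp add: rq)
    thus ?thesis by (rule g.argmin_unique[OF vU])
  qed
  have TPz: "T Pz = g.f0"
    unfolding g.f0_def
    by (rule T_eq[OF _ _ g.u0_in_U risk_z]) (simp_all add: Pz_def finite_Pemp set_sub[OF z_in])
  have Tt: "T (mixture t Pz Py) = g.zf (uvec + t *\<^sub>R dw)" if t: "0 < t" "t < min 1 g.del" for t
  proof (rule T_eq)
    show "finite (set_pmf (mixture t Pz Py))"
      by (auto simp: mixture_def Pz_def Py_def finite_Pemp)
    show "set_pmf (mixture t Pz Py) \<subseteq> UNIV \<times> Ys"
      using set_sub[OF z_in] set_sub[OF y_in] by (auto simp: mixture_def Pz_def Py_def split: if_splits)
    show "uvec + t *\<^sub>R dw \<in> g.U"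
      unfolding g.U_def
    proof (intro CollectI allI)
      fix j
      have "\<bar>(uvec + t *\<^sub>R dw) $ j - uvec $ j\<bar> = t * \<bar>dw $ j\<bar>" using t by (simp add: abs_mult)
      also have "\<dots> \<le> t * 1" using t dw_comp[of j] by (intro mult_left_mono) auto
      also have "\<dots> \<le> g.del" using t by simp
      finally show "\<bar>(uvec + t *\<^sub>R dw) $ j - uvec $ j\<bar> \<le> g.del" .
    qed
    show "\<And>f. risk loss K lam (mixture t Pz Py) f = g.F (uvec + t *\<^sub>R dw) f"
      using t by (intro risk_mix) auto
  qed
  have BIF: "has_BIF T Py Pz (g.Dd dw)"
    unfolding has_BIF_def
  proof -
    have ev: "eventually (\<lambda>t. (1 / t) *\<^sub>R (g.zf (uvec + t *\<^sub>R dw) - g.f0) = (1 / t) *\<^sub>R (T (mixture t Pz Py) - T Pz)) (at_right 0)"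
      unfolding eventually_at_right_field
    proof (intro exI conjI allI impI)
      show "(0::real) < min 1 g.del" using g.del_pos by simp
      fix t :: real assume "0 < t" "t < min 1 g.del"
      thus "(1 / t) *\<^sub>R (g.zf (uvec + t *\<^sub>R dw) - g.f0) = (1 / t) *\<^sub>R (T (mixture t Pz Py) - T Pz)"
        by (simp add: Tt TPz)
    qed
    show "((\<lambda>t. (1 / t) *\<^sub>R (T (mixture t Pz Py) - T Pz)) \<longlongrightarrow> g.Dd dw) (at_right 0)"
      using tendsto_cong[OF ev] g.dir_lim[of dw] by simp
  qed
  show ?thesis
    using deriv BIF D_eq mem by (intro exI[of _ g.Dd]) (simp add: Pz_def Py_def dw_def)
qed


end
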